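(* Let $B$ be the open unit disk. Assume $\Phi:\partial B\to\gamma\subset\mathbb R^2$ is a homeomorphism onto a simple closed curve $\gamma$, and let $U\in C^2(B;\mathbb R^2)\cap C(\overline B;\mathbb R^2)$ be the solution of $\Delta U=0$ in $B$, $U=\Phi$ on $\partial B$. If for every $P\in\partial B$ the mapping $U$ is a local homeomorphism at $P$, then there exists $\rho\in(0,1)$ such that $U$ is a diffeomorphism of $B\setminus\overline{B_\rho(0)}$ onto $U(B\setminus\overline{B_\rho(0)})$.
   Context: $U$ is a local homeomorphism at $P\in\overline B$ if there is a neighborhood $G$ of $P$ such that $U$ is one-to-one on $G\cap\overline B$. $B_\rho(0)$ denotes the open disk of radius $\rho$ centered at $0$. *)

theory Defs
  imports "HOL-Analysis.Analysis"
begin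

text \<open>The plane R^2 is identified with the type complex (a 2-dimensional euclidean space
  with Basis = {1, i}).\<close>

definition pderiv_dir :: "(complex \<Rightarrow> complex) \<Rightarrow> complex \<Rightarrow> complex \<Rightarrow> complex" where
  "pderiv_dir f v x = frechet_derivative f (at x) v"

definition C1_on :: "complex set \<Rightarrow> (complex \<Rightarrow> complex) \<Rightarrow> bool" where
  "C1_on S f \<longleftrightarrow> (\<forall>x\<in>S. f differentiable (at x)) \<and>
     (\<forall>v\<in>Basis. continuous_on S (pderiv_dir f v))"

definition C2_on :: "complex set \<Rightarrow> (complex \<Rightarrow> complex) \<Rightarrow> bool" where
  "C2_on S f \<longleftrightarrow> (\<forall>x\<in>S. f differentiable (at x)) \<and>
     (\<forall>v\<in>Basis. \<forall>x\<in>S. pderiv_dir f v differentiable (at x)) \<and>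
     (\<forall>v\<in>Basis. \<forall>w\<in>Basis. continuous_on S (pderiv_dir (pderiv_dir f v) w))"

definition laplacian :: "(complex \<Rightarrow> complex) \<Rightarrow> complex \<Rightarrow> complex" where
  "laplacian f x = (\<Sum>v\<in>Basis. pderiv_dir (pderiv_dir f v) v x)"

definition local_homeo_at :: "(complex \<Rightarrow> complex) \<Rightarrow> complex \<Rightarrow> bool" where
  "local_homeo_at U P \<longleftrightarrow> (\<exists>G. open G \<and> P \<in> G \<and> inj_on U (G \<inter> cball 0 1))"

definition diffeo_onto_image :: "(complex \<Rightarrow> complex) \<Rightarrow> complex set \<Rightarrow> bool" where
  "diffeo_onto_image U A \<longleftrightarrow> inj_on U A \<and> open (U ` A) \<and> C1_on A U \<and>
     C1_on (U ` A) (inv_into A U)"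

end

theory Submission imports Defs "HOL-Complex_Analysis.Complex_Analysis" begin

lemma lin_expand:
  fixes D :: "complex \<Rightarrow> 'b::real_vector"
  assumes "linear D" shows "D h = Re h *\<^sub>R D 1 + Im h *\<^sub>R D \<i>"
proof -
  have "h = Re h *\<^sub>R 1 + Im h *\<^sub>R \<i>" by (simp add: complex_eq_iff)
  then have "D h = D (Re h *\<^sub>R 1 + Im h *\<^sub>R \<i>)" by simp
  also have "\<dots> = Re h *\<^sub>R D 1 + Im h *\<^sub>R D \<i>"
    using assms by (simp add: linear_add linear_scale)
  finally show ?thesis .
qed

lemma line_deriv:
  fixes f :: "complex \<Rightarrow> real"
  assumes "(f has_derivative D) (at (a + of_real s * d))"
  shows "((\<lambda>t. f (a + of_real t * d)) has_real_derivative D d) (at s)"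
proof -
  have l: "linear D" using assms has_derivative_linear by blast
  have 1: "((\<lambda>t. a + of_real t * d) has_derivative (\<lambda>t. of_real t * d)) (at s)"
    by (auto intro!: derivative_eq_intros)
  have "((\<lambda>t. f (a + of_real t * d)) has_derivative (\<lambda>t. D (of_real t * d))) (at s)"
    using has_derivative_compose[OF 1 assms] by (simp add: o_def)
  moreover have "(\<lambda>t. D (of_real t * d)) = (*) (D d)"
  proof
    fix t show "D (of_real t * d) = D d * t"
      using linear_scale[OF l, of t d] by (simp add: scaleR_conv_of_real)
  qed
  ultimately show ?thesis by (simp add: has_field_derivative_def)
qed

lemma norm_sq_le: "norm (of_real s + \<i> * of_real t :: complex) \<le> \<bar>s\<bar> + \<bar>t\<bar>"
  by (metis norm_triangle_le norm_ii norm_mult norm_of_real mult_1 order_refl)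

lemma clairaut:
  fixes v vx vy :: "complex \<Rightarrow> real" and Dx Dy :: "complex \<Rightarrow> complex \<Rightarrow> real"
  assumes S: "open S" "z \<in> S"
  and dv: "\<And>w. w \<in> S \<Longrightarrow> (v has_derivative (\<lambda>h. Re h * vx w + Im h * vy w)) (at w)"
  and dx: "\<And>w. w \<in> S \<Longrightarrow> (vx has_derivative Dx w) (at w)"
  and dy: "\<And>w. w \<in> S \<Longrightarrow> (vy has_derivative Dy w) (at w)"
  and cx: "continuous_on S (\<lambda>w. Dx w \<i>)" and cy: "continuous_on S (\<lambda>w. Dy w 1)"
  shows "Dx z \<i> = Dy z 1"
proof (rule ccontr)
  assume ne: "Dx z \<i> \<noteq> Dy z 1"
  define e where "e = \<bar>Dx z \<i> - Dy z 1\<bar> / 2"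
  have e: "e > 0" using ne by (simp add: e_def)
  obtain d1 where d1: "d1 > 0" "\<And>w. w \<in> S \<Longrightarrow> dist w z < d1 \<Longrightarrow> dist (Dx w \<i>) (Dx z \<i>) < e"
    using cx S(2) e unfolding continuous_on_iff by blast
  obtain d2 where d2: "d2 > 0" "\<And>w. w \<in> S \<Longrightarrow> dist w z < d2 \<Longrightarrow> dist (Dy w 1) (Dy z 1) < e"
    using cy S(2) e unfolding continuous_on_iff by blast
  obtain d3 where d3: "d3 > 0" "ball z d3 \<subseteq> S"
    using S openE by blast
  define h where "h = min d1 (min d2 d3) / 3"
  have h: "h > 0" using d1 d2 d3 by (simp add: h_def)
  define P where "P s t = z + of_real s + \<i> * of_real t" for s t
  have Pin: "dist (P s t) z < min d1 (min d2 d3)" if "0 \<le> s" "s \<le> h" "0 \<le> t" "t \<le> h" for s t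
  proof -
    have "dist (P s t) z = norm (of_real s + \<i> * of_real t)"
      by (simp add: P_def dist_norm)
    also have "\<dots> \<le> \<bar>s\<bar> + \<bar>t\<bar>" by (rule norm_sq_le)
    also have "\<dots> < min d1 (min d2 d3)" using that h unfolding h_def by auto
    finally show ?thesis .
  qed
  have PS: "P s t \<in> S" if "0 \<le> s" "s \<le> h" "0 \<le> t" "t \<le> h" for s t
    using Pin[OF that] d3 by (auto simp: dist_commute)
  have hor: "((\<lambda>s. v (P s t)) has_real_derivative vx (P s t)) (at s)"
    if "0 \<le> s" "s \<le> h" "0 \<le> t" "t \<le> h" for s t
  proof -
    have "(v has_derivative (\<lambda>h. Re h * vx (P s t) + Im h * vy (P s t))) (at ((z + \<i> * of_real t) + of_real s * 1))"
      using dv[OF PS[OF that]] by (simp add: P_def algebra_simps)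
    from line_deriv[OF this] show ?thesis by (simp add: P_def algebra_simps)
  qed
  have ver: "((\<lambda>t. v (P s t)) has_real_derivative vy (P s t)) (at t)"
    if "0 \<le> s" "s \<le> h" "0 \<le> t" "t \<le> h" for s t
  proof -
    have "(v has_derivative (\<lambda>h. Re h * vx (P s t) + Im h * vy (P s t))) (at ((z + of_real s) + of_real t * \<i>))"
      using dv[OF PS[OF that]] by (simp add: P_def algebra_simps)
    from line_deriv[OF this] show ?thesis by (simp add: P_def algebra_simps)
  qed
  have horx: "((\<lambda>s. vy (P s t)) has_real_derivative Dy (P s t) 1) (at s)"
    if "0 \<le> s" "s \<le> h" "0 \<le> t" "t \<le> h" for s t
  proof -
    have "(vy has_derivative Dy (P s t)) (at ((z + \<i> * of_real t) + of_real s * 1))"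
      using dy[OF PS[OF that]] by (simp add: P_def algebra_simps)
    from line_deriv[OF this] show ?thesis by (simp add: P_def algebra_simps)
  qed
  have very: "((\<lambda>t. vx (P s t)) has_real_derivative Dx (P s t) \<i>) (at t)"
    if "0 \<le> s" "s \<le> h" "0 \<le> t" "t \<le> h" for s t
  proof -
    have "(vx has_derivative Dx (P s t)) (at ((z + of_real s) + of_real t * \<i>))"
      using dx[OF PS[OF that]] by (simp add: P_def algebra_simps)
    from line_deriv[OF this] show ?thesis by (simp add: P_def algebra_simps)
  qed
  define \<Delta> where "\<Delta> = v (P h h) - v (P 0 h) - v (P h 0) + v (P 0 0)"
  have D1: "\<And>s. 0 \<le> s \<Longrightarrow> s \<le> h \<Longrightarrow> ((\<lambda>s. v (P s h) - v (P s 0)) has_real_derivative vx (P s h) - vx (P s 0)) (at s)"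
    using h by (intro DERIV_diff hor) auto
  obtain \<xi> where \<xi>: "0 < \<xi>" "\<xi> < h"
    "(v (P h h) - v (P h 0)) - (v (P 0 h) - v (P 0 0)) = (h - 0) * (vx (P \<xi> h) - vx (P \<xi> 0))"
    using MVT2[of 0 h "\<lambda>s. v (P s h) - v (P s 0)" "\<lambda>s. vx (P s h) - vx (P s 0)", OF h D1] by auto
  have D2: "\<And>t. 0 \<le> t \<Longrightarrow> t \<le> h \<Longrightarrow> ((\<lambda>t. vx (P \<xi> t)) has_real_derivative Dx (P \<xi> t) \<i>) (at t)"
    using h \<xi> by (intro very) auto
  obtain \<eta> where \<eta>: "0 < \<eta>" "\<eta> < h" "vx (P \<xi> h) - vx (P \<xi> 0) = (h - 0) * Dx (P \<xi> \<eta>) \<i>"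
    using MVT2[of 0 h "\<lambda>t. vx (P \<xi> t)" "\<lambda>t. Dx (P \<xi> t) \<i>", OF h D2] by auto
  have D3: "\<And>t. 0 \<le> t \<Longrightarrow> t \<le> h \<Longrightarrow> ((\<lambda>t. v (P h t) - v (P 0 t)) has_real_derivative vy (P h t) - vy (P 0 t)) (at t)"
    using h by (intro DERIV_diff ver) auto
  obtain \<eta>' where \<eta>': "0 < \<eta>'" "\<eta>' < h"
    "(v (P h h) - v (P 0 h)) - (v (P h 0) - v (P 0 0)) = (h - 0) * (vy (P h \<eta>') - vy (P 0 \<eta>'))"
    using MVT2[of 0 h "\<lambda>t. v (P h t) - v (P 0 t)" "\<lambda>t. vy (P h t) - vy (P 0 t)", OF h D3] by auto
  have D4: "\<And>s. 0 \<le> s \<Longrightarrow> s \<le> h \<Longrightarrow> ((\<lambda>s. vy (P s \<eta>')) has_real_derivative Dy (P s \<eta>') 1) (at s)"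
    using h \<eta>' by (intro horx) auto
  obtain \<xi>' where \<xi>': "0 < \<xi>'" "\<xi>' < h" "vy (P h \<eta>') - vy (P 0 \<eta>') = (h - 0) * Dy (P \<xi>' \<eta>') 1"
    using MVT2[of 0 h "\<lambda>s. vy (P s \<eta>')" "\<lambda>s. Dy (P s \<eta>') 1", OF h D4] by auto
  have "h * (h * Dx (P \<xi> \<eta>) \<i>) = h * (h * Dy (P \<xi>' \<eta>') 1)"
    using \<xi>(3) \<eta>(3) \<eta>'(3) \<xi>'(3) by (simp add: algebra_simps)
  then have eq: "Dx (P \<xi> \<eta>) \<i> = Dy (P \<xi>' \<eta>') 1" using h by simp
  have a: "dist (Dx (P \<xi> \<eta>) \<i>) (Dx z \<i>) < e"
    using d1(2)[OF PS[of \<xi> \<eta>]] Pin[of \<xi> \<eta>] \<xi> \<eta> by auto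
  have b: "dist (Dy (P \<xi>' \<eta>') 1) (Dy z 1) < e"
    using d2(2)[OF PS[of \<xi>' \<eta>']] Pin[of \<xi>' \<eta>'] \<xi>' \<eta>' by auto
  show False using a b eq unfolding e_def dist_real_def by (simp add: abs_if split: if_splits)
qed

lemma deriv_Re_mult:
  assumes "(U has_derivative D) F"
  shows "((\<lambda>w. Re (\<beta> * U w)) has_derivative (\<lambda>h. Re (\<beta> * D h))) F"
proof -
  have "((\<lambda>w. \<beta> * U w) has_derivative (\<lambda>h. \<beta> * D h)) F"
    by (rule has_derivative_mult_right[OF assms])
  from bounded_linear.has_derivative[OF bounded_linear_Re this] show ?thesis .
qed

lemma harm_holo:
  fixes U Ux Uy :: "complex \<Rightarrow> complex" and DX DY :: "complex \<Rightarrow> complex \<Rightarrow> complex"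
  assumes S: "open S"
   and dU: "\<And>w. w \<in> S \<Longrightarrow> (U has_derivative (\<lambda>h. Re h *\<^sub>R Ux w + Im h *\<^sub>R Uy w)) (at w)"
   and dX: "\<And>w. w \<in> S \<Longrightarrow> (Ux has_derivative DX w) (at w)"
   and dY: "\<And>w. w \<in> S \<Longrightarrow> (Uy has_derivative DY w) (at w)"
   and cX: "continuous_on S (\<lambda>w. DX w \<i>)" and cY: "continuous_on S (\<lambda>w. DY w 1)"
   and lap: "\<And>w. w \<in> S \<Longrightarrow> DX w 1 + DY w \<i> = 0"
  shows "(\<lambda>w. complex_of_real (Re (\<beta> * Ux w)) - \<i> * complex_of_real (Re (\<beta> * Uy w))) holomorphic_on S"
proof -
  define u where "u w = Re (\<beta> * U w)" for w
  have du: "(u has_derivative (\<lambda>h. Re h * Re (\<beta> * Ux w) + Im h * Re (\<beta> * Uy w))) (at w)"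
    if "w \<in> S" for w
  proof -
    have "(u has_derivative (\<lambda>h. Re (\<beta> * (Re h *\<^sub>R Ux w + Im h *\<^sub>R Uy w)))) (at w)"
      unfolding u_def by (rule deriv_Re_mult[OF dU[OF that]])
    moreover have "(\<lambda>h. Re (\<beta> * (Re h *\<^sub>R Ux w + Im h *\<^sub>R Uy w))) = (\<lambda>h. Re h * Re (\<beta> * Ux w) + Im h * Re (\<beta> * Uy w))"
      by (auto simp: scaleR_conv_of_real algebra_simps)
    ultimately show ?thesis by simp
  qed
  have sym: "Re (\<beta> * DX w \<i>) = Re (\<beta> * DY w 1)" if "w \<in> S" for w
  proof (rule clairaut[OF S that du])
    show "((\<lambda>w. Re (\<beta> * Ux w)) has_derivative (\<lambda>h. Re (\<beta> * DX w h))) (at w)" if "w \<in> S" for w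
      by (rule deriv_Re_mult[OF dX[OF that]])
    show "((\<lambda>w. Re (\<beta> * Uy w)) has_derivative (\<lambda>h. Re (\<beta> * DY w h))) (at w)" if "w \<in> S" for w
      by (rule deriv_Re_mult[OF dY[OF that]])
    show "continuous_on S (\<lambda>w. Re (\<beta> * DX w \<i>))"
      by (intro continuous_intros cX)
    show "continuous_on S (\<lambda>w. Re (\<beta> * DY w 1))"
      by (intro continuous_intros cY)
  qed
  show ?thesis
  proof (rule holomorphic_onI)
    fix w assume w: "w \<in> S"
    define c where "c = complex_of_real (Re (\<beta> * DX w 1)) - \<i> * complex_of_real (Re (\<beta> * DY w 1))"
    have lX: "linear (DX w)" using dX[OF w] has_derivative_linear by blast
    have lY: "linear (DY w)" using dY[OF w] has_derivative_linear by blast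
    have d: "((\<lambda>w. complex_of_real (Re (\<beta> * Ux w)) - \<i> * complex_of_real (Re (\<beta> * Uy w))) has_derivative
       (\<lambda>h. complex_of_real (Re (\<beta> * DX w h)) - \<i> * complex_of_real (Re (\<beta> * DY w h)))) (at w)"
      using dX[OF w] dY[OF w]
      by (auto intro!: derivative_eq_intros)
    have "(\<lambda>h. complex_of_real (Re (\<beta> * DX w h)) - \<i> * complex_of_real (Re (\<beta> * DY w h))) = (*) c"
    proof
      fix h
      have x: "DX w h = Re h *\<^sub>R DX w 1 + Im h *\<^sub>R DX w \<i>" by (rule lin_expand[OF lX])
      have y: "DY w h = Re h *\<^sub>R DY w 1 + Im h *\<^sub>R DY w \<i>" by (rule lin_expand[OF lY])
      have l: "DY w \<i> = - DX w 1" using lap[OF w] by (simp add: eq_neg_iff_add_eq_0 add.commute)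
      show "complex_of_real (Re (\<beta> * DX w h)) - \<i> * complex_of_real (Re (\<beta> * DY w h)) = c * h"
        unfolding x y l c_def using arg_cong[OF sym[OF w], of "\<lambda>x. Im h * x"]
        by (simp add: complex_eq_iff scaleR_conv_of_real algebra_simps)
    qed
    with d show "(\<lambda>w. complex_of_real (Re (\<beta> * Ux w)) - \<i> * complex_of_real (Re (\<beta> * Uy w))) field_differentiable at w within S"
      by (metis field_differentiable_def has_field_derivative_def has_field_derivative_at_within)
  qed
qed

lemma conn_between:
  fixes I :: "real set"
  assumes "connected I" "p \<in> I" "a \<in> I" "min p a \<le> x" "x \<le> max p a"
  shows "x \<in> I"
proof (cases "p \<le> a")
  case True then show ?thesis using connected_contains_Icc[OF assms(1,2,3)] assms by auto
next
  case False then show ?thesis using connected_contains_Icc[OF assms(1,3,2)] assms by auto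
qed

lemma real3:
  fixes I1 I2 I3 :: "real set"
  assumes c: "connected I1" "connected I2" "connected I3"
    and p: "p \<in> I1" "p \<in> I2" "p \<in> I3"
    and a: "a1 \<in> I1" "a2 \<in> I2" "a3 \<in> I3" "a1 \<noteq> p" "a2 \<noteq> p" "a3 \<noteq> p"
  shows "\<exists>x. x \<noteq> p \<and> ((x \<in> I1 \<and> x \<in> I2) \<or> (x \<in> I1 \<and> x \<in> I3) \<or> (x \<in> I2 \<and> x \<in> I3))"
proof -
  have pair: "\<exists>x. x \<noteq> p \<and> x \<in> I \<and> x \<in> J"
    if "connected I" "connected J" "p \<in> I" "p \<in> J" "a \<in> I" "b \<in> J" "a \<noteq> p" "b \<noteq> p"
       "(a > p \<and> b > p) \<or> (a < p \<and> b < p)" for I J a b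
  proof (cases "a > p")
    case True
    then have "b > p" using that by auto
    then show ?thesis using True that conn_between[of I p a "min a b"] conn_between[of J p b "min a b"]
      by (intro exI[of _ "min a b"]) auto
  next
    case False
    then have "a < p" "b < p" using that by auto
    then show ?thesis using that conn_between[of I p a "max a b"] conn_between[of J p b "max a b"]
      by (intro exI[of _ "max a b"]) auto
  qed
  consider "(a1 > p \<and> a2 > p) \<or> (a1 < p \<and> a2 < p)" | "(a1 > p \<and> a3 > p) \<or> (a1 < p \<and> a3 < p)"
    | "(a2 > p \<and> a3 > p) \<or> (a2 < p \<and> a3 < p)"
    using a by linarith
  then show ?thesis
  proof cases
    case 1 then show ?thesis using pair[of I1 I2 a1 a2] c p a by blast
  next
    case 2 then show ?thesis using pair[of I1 I3 a1 a3] c p a by blast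
  next
    case 3 then show ?thesis using pair[of I2 I3 a2 a3] c p a by blast
  qed
qed

lemma three_sets:
  fixes U :: "complex \<Rightarrow> complex"
  assumes \<alpha>: "\<alpha> \<noteq> 0"
    and inj: "inj_on U (S1 \<union> S2 \<union> S3)" and cont: "continuous_on (S1 \<union> S2 \<union> S3) U"
    and c: "connected S1" "connected S2" "connected S3"
    and z: "z0 \<in> S1" "z0 \<in> S2" "z0 \<in> S3"
    and int: "S1 \<inter> S2 \<subseteq> {z0}" "S1 \<inter> S3 \<subseteq> {z0}" "S2 \<inter> S3 \<subseteq> {z0}"
    and w: "w1 \<in> S1" "w2 \<in> S2" "w3 \<in> S3" "w1 \<noteq> z0" "w2 \<noteq> z0" "w3 \<noteq> z0"
    and line: "\<And>w. w \<in> S1 \<union> S2 \<union> S3 \<Longrightarrow> Re (cnj \<alpha> * U w) = k"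
  shows False
proof -
  define T where "T = S1 \<union> S2 \<union> S3"
  define \<tau> where "\<tau> w = Im (cnj \<alpha> * U w)" for w
  have tinj: "a = b" if "a \<in> T" "b \<in> T" "\<tau> a = \<tau> b" for a b
  proof -
    have "cnj \<alpha> * U a = cnj \<alpha> * U b"
      using that line unfolding \<tau>_def T_def by (simp add: complex_eq_iff)
    then have "U a = U b" using \<alpha> by simp
    then show ?thesis using inj that unfolding T_def by (meson inj_onD)
  qed
  have ct: "continuous_on T \<tau>" unfolding \<tau>_def T_def by (intro continuous_intros cont)
  have cI: "connected (\<tau> ` Si)" if "connected Si" "Si \<subseteq> T" for Si
    using connected_continuous_image[OF continuous_on_subset[OF ct that(2)] that(1)] .
  have sub: "S1 \<subseteq> T" "S2 \<subseteq> T" "S3 \<subseteq> T" unfolding T_def by auto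
  have ne: "\<tau> w1 \<noteq> \<tau> z0" "\<tau> w2 \<noteq> \<tau> z0" "\<tau> w3 \<noteq> \<tau> z0"
    using tinj w z sub by blast+
  obtain x where x: "x \<noteq> \<tau> z0" "(x \<in> \<tau>`S1 \<and> x \<in> \<tau>`S2) \<or> (x \<in> \<tau>`S1 \<and> x \<in> \<tau>`S3) \<or> (x \<in> \<tau>`S2 \<and> x \<in> \<tau>`S3)"
    using real3[OF cI[OF c(1) sub(1)] cI[OF c(2) sub(2)] cI[OF c(3) sub(3)], of "\<tau> z0" "\<tau> w1" "\<tau> w2" "\<tau> w3"]
      z w ne by blast
  have both: "\<tau> y = \<tau> z0" if "y \<in> A" "y' \<in> B" "\<tau> y = \<tau> y'" "A \<inter> B \<subseteq> {z0}" "A \<subseteq> T" "B \<subseteq> T" for y y' A B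
  proof -
    have "y = y'" using tinj that by blast
    then show ?thesis using that by auto
  qed
  from x(2) show False
  proof (elim disjE conjE)
    assume "x \<in> \<tau>`S1" "x \<in> \<tau>`S2"
    then obtain y y' where "y \<in> S1" "y' \<in> S2" "x = \<tau> y" "x = \<tau> y'" by auto
    then show False using both[of y S1 y' S2] int sub x(1) by auto
  next
    assume "x \<in> \<tau>`S1" "x \<in> \<tau>`S3"
    then obtain y y' where "y \<in> S1" "y' \<in> S3" "x = \<tau> y" "x = \<tau> y'" by auto
    then show False using both[of y S1 y' S3] int sub x(1) by auto
  next
    assume "x \<in> \<tau>`S2" "x \<in> \<tau>`S3"
    then obtain y y' where "y \<in> S2" "y' \<in> S3" "x = \<tau> y" "x = \<tau> y'" by auto
    then show False using both[of y S2 y' S3] int sub x(1) by auto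
  qed
qed

lemma seg_inter:
  fixes a b :: complex
  assumes "norm a = 1" "norm b = 1" "a \<noteq> b" "x \<in> closed_segment 0 (d *\<^sub>R a)" "x \<in> closed_segment 0 (d *\<^sub>R b)" "d > 0"
  shows "x = 0"
proof -
  obtain u where u: "0 \<le> u" "u \<le> 1" "x = u *\<^sub>R (d *\<^sub>R a)"
    using assms(4) by (auto simp: closed_segment_def)
  obtain v where v: "0 \<le> v" "v \<le> 1" "x = v *\<^sub>R (d *\<^sub>R b)"
    using assms(5) by (auto simp: closed_segment_def)
  have "norm x = u * d" using u assms by simp
  moreover have "norm x = v * d" using v assms by simp
  ultimately have "u = v" using assms(6) by simp
  show ?thesis
  proof (rule ccontr)
    assume "x \<noteq> 0"
    then have "u * d \<noteq> 0" using u by auto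
    have "(u * d) *\<^sub>R a = (u * d) *\<^sub>R b" using u(3) v(3) \<open>u = v\<close> by (simp only: scaleR_scaleR)
    then have "a = b" using \<open>u * d \<noteq> 0\<close> by (metis scaleR_cancel_left)
    then show False using assms(3) by simp
  qed
qed

lemma rays_from_homeo:
  fixes \<phi> :: "complex \<Rightarrow> complex"
  assumes B: "open B" "z0 \<in> B" and cont: "continuous_on B \<phi>" and inj: "inj_on \<phi> B" and z: "\<phi> z0 = 0"
    and n: "norm \<zeta>1 = 1" "norm \<zeta>2 = 1" "norm \<zeta>3 = 1" and d: "\<zeta>1 \<noteq> \<zeta>2" "\<zeta>1 \<noteq> \<zeta>3" "\<zeta>2 \<noteq> \<zeta>3"
  obtains S1 S2 S3 w1 w2 w3 where "S1 \<subseteq> B" "S2 \<subseteq> B" "S3 \<subseteq> B"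
    "connected S1" "connected S2" "connected S3" "z0 \<in> S1" "z0 \<in> S2" "z0 \<in> S3"
    "S1 \<inter> S2 \<subseteq> {z0}" "S1 \<inter> S3 \<subseteq> {z0}" "S2 \<inter> S3 \<subseteq> {z0}"
    "w1 \<in> S1" "w2 \<in> S2" "w3 \<in> S3" "w1 \<noteq> z0" "w2 \<noteq> z0" "w3 \<noteq> z0"
    "\<And>w. w \<in> S1 \<Longrightarrow> \<exists>t. 0 \<le> t \<and> \<phi> w = of_real t * \<zeta>1"
    "\<And>w. w \<in> S2 \<Longrightarrow> \<exists>t. 0 \<le> t \<and> \<phi> w = of_real t * \<zeta>2"
    "\<And>w. w \<in> S3 \<Longrightarrow> \<exists>t. 0 \<le> t \<and> \<phi> w = of_real t * \<zeta>3"
proof -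
  obtain \<psi> where hom: "homeomorphism B (\<phi> ` B) \<phi> \<psi>"
    using invariance_of_domain_homeomorphism[OF B(1) cont _ inj] by auto
  have op: "open (\<phi> ` B)" using invariance_of_domain[OF cont B(1) inj] .
  have "0 \<in> \<phi> ` B" using B z by force
  then obtain e where e: "e > 0" "ball 0 e \<subseteq> \<phi> ` B" using op openE by blast
  define d where "d = e / 2"
  have dpos: "d > 0" using e by (simp add: d_def)
  have segsub: "closed_segment 0 (d *\<^sub>R \<zeta>) \<subseteq> \<phi> ` B" if "norm \<zeta> = 1" for \<zeta>
  proof -
    have "closed_segment 0 (d *\<^sub>R \<zeta>) \<subseteq> ball 0 e"
    proof (rule convex_contains_segment[THEN iffD1, rule_format])
      show "convex (ball (0::complex) e)" by simp
      show "0 \<in> ball (0::complex) e" using e by simp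
      show "d *\<^sub>R \<zeta> \<in> ball 0 e" using that e dpos by (simp add: d_def)
    qed
    then show ?thesis using e by blast
  qed
  have \<psi>\<phi>: "\<psi> (\<phi> x) = x" if "x \<in> B" for x using homeomorphism_apply1[OF hom that] .
  have \<phi>\<psi>: "\<phi> (\<psi> y) = y" if "y \<in> \<phi> ` B" for y using homeomorphism_apply2[OF hom that] .
  have \<psi>B: "\<psi> y \<in> B" if "y \<in> \<phi> ` B" for y using hom that by (auto simp: homeomorphism_def)
  have c\<psi>: "continuous_on (\<phi> ` B) \<psi>" using hom by (simp add: homeomorphism_def)
  have \<psi>0: "\<psi> 0 = z0" using \<psi>\<phi>[OF B(2)] z by simp
  define S where "S \<zeta> = \<psi> ` closed_segment 0 (d *\<^sub>R \<zeta>)" for \<zeta>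
  have P1: "S \<zeta> \<subseteq> B" "connected (S \<zeta>)" "z0 \<in> S \<zeta>" "\<psi> (d *\<^sub>R \<zeta>) \<in> S \<zeta>" "\<psi> (d *\<^sub>R \<zeta>) \<noteq> z0"
    "\<And>w. w \<in> S \<zeta> \<Longrightarrow> \<exists>t. 0 \<le> t \<and> \<phi> w = of_real t * \<zeta>"
    if "norm \<zeta> = 1" for \<zeta>
  proof -
    show "S \<zeta> \<subseteq> B" using segsub[OF that] \<psi>B unfolding S_def by blast
    show "connected (S \<zeta>)" unfolding S_def
      by (rule connected_continuous_image[OF continuous_on_subset[OF c\<psi> segsub[OF that]]]) simp
    show "z0 \<in> S \<zeta>" unfolding S_def using \<psi>0 by force
    show "\<psi> (d *\<^sub>R \<zeta>) \<in> S \<zeta>" unfolding S_def by force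
    show "\<psi> (d *\<^sub>R \<zeta>) \<noteq> z0"
    proof
      assume "\<psi> (d *\<^sub>R \<zeta>) = z0"
      then have "\<phi> (\<psi> (d *\<^sub>R \<zeta>)) = 0" using z by simp
      moreover have "d *\<^sub>R \<zeta> \<in> \<phi> ` B" using segsub[OF that] by auto
      ultimately have "d *\<^sub>R \<zeta> = 0" using \<phi>\<psi> by simp
      then show False using dpos that by auto
    qed
    show "\<exists>t. 0 \<le> t \<and> \<phi> w = of_real t * \<zeta>" if "w \<in> S \<zeta>" for w
    proof -
      obtain y where y: "y \<in> closed_segment 0 (d *\<^sub>R \<zeta>)" "w = \<psi> y" using \<open>w \<in> S \<zeta>\<close> unfolding S_def by auto
      obtain u where u: "0 \<le> u" "y = u *\<^sub>R (d *\<^sub>R \<zeta>)" using y(1) by (auto simp: closed_segment_def)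
      have "\<phi> w = y" using y \<phi>\<psi> segsub[OF \<open>norm \<zeta> = 1\<close>] by auto
      then show ?thesis using u dpos by (intro exI[of _ "u * d"]) (auto simp: scaleR_conv_of_real)
    qed
  qed
  have P2: "S \<zeta> \<inter> S \<zeta>' \<subseteq> {z0}" if "norm \<zeta> = 1" "norm \<zeta>' = 1" "\<zeta> \<noteq> \<zeta>'" for \<zeta> \<zeta>'
  proof
    fix w assume "w \<in> S \<zeta> \<inter> S \<zeta>'"
    then obtain y y' where y: "y \<in> closed_segment 0 (d *\<^sub>R \<zeta>)" "w = \<psi> y"
      and y': "y' \<in> closed_segment 0 (d *\<^sub>R \<zeta>')" "w = \<psi> y'" unfolding S_def by auto
    have "y = \<phi> w" using y \<phi>\<psi> segsub[OF that(1)] by auto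
    moreover have "y' = \<phi> w" using y' \<phi>\<psi> segsub[OF that(2)] by auto
    ultimately have "y = y'" by simp
    then have "y = 0" using seg_inter[OF that, of y d] y y' dpos by simp
    then show "w \<in> {z0}" using y \<psi>0 by simp
  qed
  show ?thesis
    using that[of "S \<zeta>1" "S \<zeta>2" "S \<zeta>3" "\<psi> (d *\<^sub>R \<zeta>1)" "\<psi> (d *\<^sub>R \<zeta>2)" "\<psi> (d *\<^sub>R \<zeta>3)"]
      P1[OF n(1)] P1[OF n(2)] P1[OF n(3)] P2[OF n(1) n(2) d(1)] P2[OF n(1) n(3) d(2)] P2[OF n(2) n(3) d(3)]
    by blast
qed

lemma exp_i_ne:
  assumes "0 < \<bar>a - b\<bar>" "\<bar>a - b\<bar> < 2 * pi"
  shows "exp (\<i> * complex_of_real a) \<noteq> exp (\<i> * complex_of_real b)"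
proof
  assume "exp (\<i> * complex_of_real a) = exp (\<i> * complex_of_real b)"
  then obtain m :: int where m: "\<i> * complex_of_real a = \<i> * complex_of_real b + (of_int (2 * m) * pi) * \<i>"
    unfolding exp_eq by blast
  then have "a = b + 2 * m * pi" by (simp add: complex_eq_iff)
  then have "a - b = 2 * pi * m" by simp
  then have "\<bar>a - b\<bar> = 2 * pi * \<bar>m\<bar>" by (simp add: abs_mult)
  moreover have "m = 0 \<or> \<bar>m\<bar> \<ge> 1" by linarith
  ultimately show False using assms by (auto simp: mult_le_cancel_left1)
qed

lemma three_rays:
  fixes H :: "complex \<Rightarrow> complex"
  assumes r: "r > 0" and holH: "H holomorphic_on ball z0 r" and H0: "H z0 = 0"
    and dH: "(H has_field_derivative 0) (at z0)"
  obtains S1 S2 S3 w1 w2 w3 where "S1 \<subseteq> ball z0 r" "S2 \<subseteq> ball z0 r" "S3 \<subseteq> ball z0 r"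
    "connected S1" "connected S2" "connected S3" "z0 \<in> S1" "z0 \<in> S2" "z0 \<in> S3"
    "S1 \<inter> S2 \<subseteq> {z0}" "S1 \<inter> S3 \<subseteq> {z0}" "S2 \<inter> S3 \<subseteq> {z0}"
    "w1 \<in> S1" "w2 \<in> S2" "w3 \<in> S3" "w1 \<noteq> z0" "w2 \<noteq> z0" "w3 \<noteq> z0"
    "\<And>w. w \<in> S1 \<union> S2 \<union> S3 \<Longrightarrow> Re (H w) = 0"
proof (cases "H constant_on ball z0 r")
  case True
  then have H0': "H w = 0" if "w \<in> ball z0 r" for w
    using H0 r that unfolding constant_on_def by (metis centre_in_ball)
  have c: "continuous_on (ball z0 r) (\<lambda>w. w - z0)" by (intro continuous_intros)
  have i: "inj_on (\<lambda>w. w - z0) (ball z0 r)" by (auto simp: inj_on_def)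
  have z0r: "z0 \<in> ball z0 r" using r by simp
  have nn: "norm (1::complex) = 1" "norm \<i> = 1" "norm (-1::complex) = 1" by auto
  have dd: "(1::complex) \<noteq> \<i>" "(1::complex) \<noteq> -1" "\<i> \<noteq> (-1::complex)" by (auto simp: complex_eq_iff)
  show ?thesis
  proof (rule rays_from_homeo[OF open_ball z0r c i _ nn dd])
    fix S1 S2 S3 w1 w2 w3
    assume S: "S1 \<subseteq> ball z0 r" "S2 \<subseteq> ball z0 r" "S3 \<subseteq> ball z0 r"
      "connected S1" "connected S2" "connected S3" "z0 \<in> S1" "z0 \<in> S2" "z0 \<in> S3"
      "S1 \<inter> S2 \<subseteq> {z0}" "S1 \<inter> S3 \<subseteq> {z0}" "S2 \<inter> S3 \<subseteq> {z0}"
      "w1 \<in> S1" "w2 \<in> S2" "w3 \<in> S3" "w1 \<noteq> z0" "w2 \<noteq> z0" "w3 \<noteq> z0"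
    have RH: "Re (H w) = 0" if w: "w \<in> S1 \<union> S2 \<union> S3" for w
    proof -
      have "w \<in> ball z0 r" using w S(1-3) by blast
      then show ?thesis using H0' by simp
    qed
    show thesis by (rule that[OF S RH])
  qed simp
next
  case False
  obtain g r' n where n: "0 < n" and r': "0 < r'" "ball z0 r' \<subseteq> ball z0 r"
    and holg: "g holomorphic_on ball z0 r'"
    and fac: "\<And>w. w \<in> ball z0 r' \<Longrightarrow> H w = (w - z0)^n * g w"
    and gnz: "\<And>w. w \<in> ball z0 r' \<Longrightarrow> g w \<noteq> 0"
    using holomorphic_factor_zero_nonconstant[OF holH open_ball connected_ball _ H0 False] r by (metis centre_in_ball)
  have z0in: "z0 \<in> ball z0 r'" using r' by simp
  have gd: "(g has_field_derivative deriv g z0) (at z0)"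
    using holg z0in by (meson DERIV_deriv_iff_field_differentiable holomorphic_on_imp_differentiable_at open_ball)
  have n2: "n \<ge> 2"
  proof (rule ccontr)
    assume "\<not> n \<ge> 2"
    then have n1: "n = 1" using n by simp
    have "((\<lambda>w. (w - z0) * g w) has_field_derivative g z0) (at z0)"
      using DERIV_mult[OF DERIV_diff[OF DERIV_ident DERIV_const] gd, of z0] by simp
    moreover have "(H has_field_derivative g z0) (at z0)"
      by (rule has_field_derivative_transform_within_open[OF calculation open_ball z0in]) (use fac n1 in auto)
    ultimately have "g z0 = 0" using dH DERIV_unique by blast
    then show False using gnz z0in by blast
  qed
  obtain L where holL: "L holomorphic_on ball z0 r'" and L: "\<And>w. w \<in> ball z0 r' \<Longrightarrow> g w = exp (L w)"
    using contractible_imp_holomorphic_log[OF holg convex_imp_contractible[OF convex_ball] gnz] by metis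
  define \<rho> where "\<rho> w = exp (L w / of_nat n)" for w
  define \<phi> where "\<phi> w = (w - z0) * \<rho> w" for w
  have \<rho>n: "\<rho> w ^ n = g w" if "w \<in> ball z0 r'" for w
  proof -
    have "\<rho> w ^ n = exp (of_nat n * (L w / of_nat n))" unfolding \<rho>_def by (rule exp_of_nat_mult[symmetric])
    also have "\<dots> = g w" using n L[OF that] by simp
    finally show ?thesis .
  qed
  have H\<phi>: "H w = \<phi> w ^ n" if "w \<in> ball z0 r'" for w
    using fac[OF that] \<rho>n[OF that] by (simp add: \<phi>_def power_mult_distrib)
  have hol\<rho>: "\<rho> holomorphic_on ball z0 r'" unfolding \<rho>_def by (intro holomorphic_intros holL) (use n in auto)
  have hol\<phi>: "\<phi> holomorphic_on ball z0 r'" unfolding \<phi>_def by (intro holomorphic_intros hol\<rho>)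
  have \<rho>d: "(\<rho> has_field_derivative deriv \<rho> z0) (at z0)"
    using hol\<rho> z0in by (meson DERIV_deriv_iff_field_differentiable holomorphic_on_imp_differentiable_at open_ball)
  have "(\<phi> has_field_derivative \<rho> z0) (at z0)"
    unfolding \<phi>_def using DERIV_mult[OF DERIV_diff[OF DERIV_ident DERIV_const] \<rho>d, of z0] by simp
  then have "deriv \<phi> z0 = \<rho> z0" by (simp add: DERIV_imp_deriv)
  then have dnz: "deriv \<phi> z0 \<noteq> 0" by (simp add: \<rho>_def)
  obtain r1 where r1: "r1 > 0" "ball z0 r1 \<subseteq> ball z0 r'" "inj_on \<phi> (ball z0 r1)"
    using has_complex_derivative_locally_injective[OF hol\<phi> z0in open_ball dnz] by blast
  have c\<phi>: "continuous_on (ball z0 r1) \<phi>"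
    using holomorphic_on_imp_continuous_on[OF hol\<phi>] r1(2) continuous_on_subset by blast
  define \<theta> where "\<theta> k = (2 * real k - 1) * pi / (2 * real n)" for k :: nat
  define \<zeta> where "\<zeta> k = exp (\<i> * complex_of_real (\<theta> k))" for k
  have \<zeta>n: "Re (\<zeta> k ^ n) = 0" if "k \<le> 2" for k
  proof -
    have "\<zeta> k ^ n = exp (of_nat n * (\<i> * complex_of_real (\<theta> k)))"
      unfolding \<zeta>_def by (rule exp_of_nat_mult[symmetric])
    also have "\<dots> = exp (\<i> * complex_of_real ((2 * real k - 1) * pi / 2))"
    proof -
      have "real n * \<theta> k = (2 * real k - 1) * pi / 2" using n by (simp add: \<theta>_def field_simps)
      then have "of_nat n * (\<i> * complex_of_real (\<theta> k)) = \<i> * complex_of_real ((2 * real k - 1) * pi / 2)"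
        by (metis mult.left_commute of_real_mult of_real_of_nat_eq)
      then show ?thesis by (rule arg_cong[where f=exp])
    qed
    finally have "Re (\<zeta> k ^ n) = cos ((2 * real k - 1) * pi / 2)" by (simp add: Re_exp)
    moreover have "cos ((2 * real k - 1) * pi / 2) = 0"
    proof -
      consider "k = 0" | "k = 1" | "k = 2" using \<open>k \<le> 2\<close> by fastforce
      then show ?thesis
      proof cases
        case 1 then show ?thesis by simp
      next
        case 2 then show ?thesis by simp
      next
        case 3
        have "cos (3 * pi / 2) = cos (pi / 2 + pi)" by (simp add: field_simps)
        also have "\<dots> = 0" by (simp only: cos_add) simp
        finally show ?thesis using 3 by simp
      qed
    qed
    ultimately show ?thesis by simp
  qed
  have \<zeta>1: "norm (\<zeta> k) = 1" for k by (simp add: \<zeta>_def)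
  have npos: "real n \<ge> 2" using n2 by simp
  have \<zeta>d: "\<zeta> j \<noteq> \<zeta> k" if "j \<le> 2" "k \<le> 2" "j \<noteq> k" for j k
  proof -
    have "\<theta> j - \<theta> k = (real j - real k) * pi / real n" using n by (simp add: \<theta>_def field_simps)
    moreover have "1 \<le> \<bar>real j - real k\<bar>" "\<bar>real j - real k\<bar> \<le> 2" using that by auto
    ultimately have e: "\<bar>\<theta> j - \<theta> k\<bar> = \<bar>real j - real k\<bar> * pi / real n"
      "1 \<le> \<bar>real j - real k\<bar>" "\<bar>real j - real k\<bar> \<le> 2"
      by (simp_all add: abs_mult abs_divide)
    have pos: "0 < \<bar>real j - real k\<bar> * pi / real n" using e npos by (simp add: pi_gt_zero)
    have "\<bar>real j - real k\<bar> * pi \<le> 2 * pi" using e(3) pi_gt_zero by (simp add: mult_right_mono)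
    moreover have "\<bar>real j - real k\<bar> * pi / real n \<le> \<bar>real j - real k\<bar> * pi / 2"
      by (rule divide_left_mono) (use npos pi_gt_zero in auto)
    ultimately have "\<bar>real j - real k\<bar> * pi / real n \<le> 2 * pi / 2" by linarith
    then have "0 < \<bar>\<theta> j - \<theta> k\<bar>" "\<bar>\<theta> j - \<theta> k\<bar> < 2 * pi"
      using e(1) pos pi_gt_zero by auto
    then show ?thesis unfolding \<zeta>_def by (rule exp_i_ne)
  qed
  have \<phi>0: "\<phi> z0 = 0" by (simp add: \<phi>_def)
  have d01: "\<zeta> 0 \<noteq> \<zeta> 1" by (rule \<zeta>d) auto
  have d02: "\<zeta> 0 \<noteq> \<zeta> 2" by (rule \<zeta>d) auto
  have d12: "\<zeta> 1 \<noteq> \<zeta> 2" by (rule \<zeta>d) auto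
  have z0r1: "z0 \<in> ball z0 r1" using r1(1) by simp
  have Rz: "Re (H w) = 0" if tt: "w \<in> ball z0 r1" "\<exists>t. 0 \<le> t \<and> \<phi> w = of_real t * \<zeta> k" "k \<le> 2" for w k
  proof -
    obtain t where t: "\<phi> w = of_real t * \<zeta> k" using tt by blast
    have "H w = \<phi> w ^ n" using H\<phi> tt r1 by blast
    also have "\<dots> = of_real (t ^ n) * \<zeta> k ^ n" by (simp add: t power_mult_distrib)
    finally show ?thesis using \<zeta>n[OF tt(3)] by simp
  qed
  show ?thesis
  proof (rule rays_from_homeo[OF open_ball z0r1 c\<phi> r1(3) \<phi>0 \<zeta>1 \<zeta>1 \<zeta>1 d01 d02 d12])
    fix S1 S2 S3 w1 w2 w3
    assume S: "S1 \<subseteq> ball z0 r1" "S2 \<subseteq> ball z0 r1" "S3 \<subseteq> ball z0 r1"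
      "connected S1" "connected S2" "connected S3" "z0 \<in> S1" "z0 \<in> S2" "z0 \<in> S3"
      "S1 \<inter> S2 \<subseteq> {z0}" "S1 \<inter> S3 \<subseteq> {z0}" "S2 \<inter> S3 \<subseteq> {z0}"
      "w1 \<in> S1" "w2 \<in> S2" "w3 \<in> S3" "w1 \<noteq> z0" "w2 \<noteq> z0" "w3 \<noteq> z0"
    and ray: "\<And>w. w \<in> S1 \<Longrightarrow> \<exists>t. 0 \<le> t \<and> \<phi> w = of_real t * \<zeta> 0"
      "\<And>w. w \<in> S2 \<Longrightarrow> \<exists>t. 0 \<le> t \<and> \<phi> w = of_real t * \<zeta> 1"
      "\<And>w. w \<in> S3 \<Longrightarrow> \<exists>t. 0 \<le> t \<and> \<phi> w = of_real t * \<zeta> 2"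
    have RH: "Re (H w) = 0" if w: "w \<in> S1 \<union> S2 \<union> S3" for w
    proof -
      consider "w \<in> S1" | "w \<in> S2" | "w \<in> S3" using w by blast
      then show ?thesis
      proof cases
        case 1 then show ?thesis using S(1) ray(1)[OF 1] Rz[of w 0] by auto
      next
        case 2 then show ?thesis using S(2) ray(2)[OF 2] Rz[of w 1] by auto
      next
        case 3 then show ?thesis using S(3) ray(3)[OF 3] Rz[of w 2] by auto
      qed
    qed
    have sub: "S1 \<subseteq> ball z0 r" "S2 \<subseteq> ball z0 r" "S3 \<subseteq> ball z0 r" using S(1-3) r1(2) r'(2) by blast+
    show thesis by (rule that[OF sub S(4-18) RH])
  qed
qed

lemma lewy:
  fixes U Ux Uy :: "complex \<Rightarrow> complex" and DX DY :: "complex \<Rightarrow> complex \<Rightarrow> complex"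
  assumes A: "open A" "z0 \<in> A" and inj: "inj_on U A" and cU: "continuous_on A U"
   and dU: "\<And>w. w \<in> A \<Longrightarrow> (U has_derivative (\<lambda>h. Re h *\<^sub>R Ux w + Im h *\<^sub>R Uy w)) (at w)"
   and dX: "\<And>w. w \<in> A \<Longrightarrow> (Ux has_derivative DX w) (at w)"
   and dY: "\<And>w. w \<in> A \<Longrightarrow> (Uy has_derivative DY w) (at w)"
   and cX: "continuous_on A (\<lambda>w. DX w \<i>)" and cY: "continuous_on A (\<lambda>w. DY w 1)"
   and lap: "\<And>w. w \<in> A \<Longrightarrow> DX w 1 + DY w \<i> = 0"
  shows "Im (cnj (Ux z0) * Uy z0) \<noteq> 0"
proof
  assume det: "Im (cnj (Ux z0) * Uy z0) = 0"
  define \<alpha> where "\<alpha> = (if Ux z0 \<noteq> 0 then \<i> * Ux z0 else if Uy z0 \<noteq> 0 then \<i> * Uy z0 else 1)"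
  have \<alpha>0: "\<alpha> \<noteq> 0" by (simp add: \<alpha>_def)
  have a12: "Re (cnj \<alpha> * Ux z0) = 0 \<and> Re (cnj \<alpha> * Uy z0) = 0"
  proof (cases "Ux z0 \<noteq> 0")
    case True
    then show ?thesis using det by (simp add: \<alpha>_def)
  next
    case False
    then show ?thesis by (cases "Uy z0 = 0") (simp_all add: \<alpha>_def)
  qed
  define \<beta> where "\<beta> = cnj \<alpha>"
  define f where "f w = complex_of_real (Re (\<beta> * Ux w)) - \<i> * complex_of_real (Re (\<beta> * Uy w))" for w
  have holf: "f holomorphic_on A"
    unfolding f_def by (rule harm_holo[OF A(1) dU dX dY cX cY lap])
  have f0: "f z0 = 0" using a12 by (simp add: f_def \<beta>_def)
  obtain r0 where r0: "r0 > 0" "ball z0 r0 \<subseteq> A" using A openE by blast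
  obtain F where F0: "\<And>x. x \<in> ball z0 r0 \<Longrightarrow> (F has_field_derivative f x) (at x within ball z0 r0)"
    using holomorphic_convex_primitive'[OF convex_ball open_ball holomorphic_on_subset[OF holf r0(2)]] by blast
  have F: "(F has_field_derivative f x) (at x)" if "x \<in> ball z0 r0" for x
    using F0[OF that] at_within_open[OF that open_ball] by simp
  define u where "u w = Re (\<beta> * U w)" for w
  have du: "(u has_derivative (\<lambda>h. Re h * Re (\<beta> * Ux w) + Im h * Re (\<beta> * Uy w))) (at w)"
    if "w \<in> A" for w
  proof -
    have "(u has_derivative (\<lambda>h. Re (\<beta> * (Re h *\<^sub>R Ux w + Im h *\<^sub>R Uy w)))) (at w)"
      unfolding u_def by (rule deriv_Re_mult[OF dU[OF that]])
    moreover have "(\<lambda>h. Re (\<beta> * (Re h *\<^sub>R Ux w + Im h *\<^sub>R Uy w))) = (\<lambda>h. Re h * Re (\<beta> * Ux w) + Im h * Re (\<beta> * Uy w))"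
      by (auto simp: scaleR_conv_of_real algebra_simps)
    ultimately show ?thesis by simp
  qed
  have dz: "((\<lambda>w. Re (F w) - u w) has_derivative (\<lambda>h. 0)) (at x within ball z0 r0)"
    if x: "x \<in> ball z0 r0" for x
  proof -
    have "(F has_derivative (*) (f x)) (at x)" using F[OF x] by (simp add: has_field_derivative_def)
    from bounded_linear.has_derivative[OF bounded_linear_Re this]
    have "((\<lambda>w. Re (F w)) has_derivative (\<lambda>h. Re (f x * h))) (at x)" .
    from has_derivative_diff[OF this du[of x]] x r0
    have "((\<lambda>w. Re (F w) - u w) has_derivative (\<lambda>h. Re (f x * h) - (Re h * Re (\<beta> * Ux x) + Im h * Re (\<beta> * Uy x)))) (at x)"
      by blast
    moreover have "(\<lambda>h. Re (f x * h) - (Re h * Re (\<beta> * Ux x) + Im h * Re (\<beta> * Uy x))) = (\<lambda>h. 0)"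
      by (auto simp: f_def algebra_simps)
    ultimately show ?thesis by (simp add: has_derivative_at_withinI)
  qed
  obtain C where C: "\<And>x. x \<in> ball z0 r0 \<Longrightarrow> Re (F x) - u x = C"
    using has_derivative_zero_constant[OF convex_ball dz] by blast
  define H where "H w = F w - F z0" for w
  have z0b: "z0 \<in> ball z0 r0" using r0 by simp
  have dH: "(H has_field_derivative f x) (at x)" if "x \<in> ball z0 r0" for x
    unfolding H_def using DERIV_diff[OF F[OF that] DERIV_const] by simp
  have holH: "H holomorphic_on ball z0 r0"
    using dH by (meson field_differentiable_at_within field_differentiable_def holomorphic_on_def)
  have H0: "H z0 = 0" by (simp add: H_def)
  have dH0: "(H has_field_derivative 0) (at z0)" using dH[OF z0b] f0 by simp
  show False
  proof (rule three_rays[OF r0(1) holH H0 dH0])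
    fix S1 S2 S3 w1 w2 w3
    assume S: "S1 \<subseteq> ball z0 r0" "S2 \<subseteq> ball z0 r0" "S3 \<subseteq> ball z0 r0"
      "connected S1" "connected S2" "connected S3" "z0 \<in> S1" "z0 \<in> S2" "z0 \<in> S3"
      "S1 \<inter> S2 \<subseteq> {z0}" "S1 \<inter> S3 \<subseteq> {z0}" "S2 \<inter> S3 \<subseteq> {z0}"
      "w1 \<in> S1" "w2 \<in> S2" "w3 \<in> S3" "w1 \<noteq> z0" "w2 \<noteq> z0" "w3 \<noteq> z0"
      and RH: "\<And>w. w \<in> S1 \<union> S2 \<union> S3 \<Longrightarrow> Re (H w) = 0"
    have sub: "S1 \<union> S2 \<union> S3 \<subseteq> A" using S(1-3) r0(2) by blast
    have line: "Re (cnj \<alpha> * U w) = u z0" if w: "w \<in> S1 \<union> S2 \<union> S3" for w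
    proof -
      have wb: "w \<in> ball z0 r0" using w S(1-3) by blast
      have "Re (F w) = Re (F z0)" using RH[OF w] by (simp add: H_def)
      then have "u w = u z0" using C[OF wb] C[OF z0b] by simp
      then show ?thesis by (simp add: u_def \<beta>_def)
    qed
    show False
      by (rule three_sets[OF \<alpha>0 inj_on_subset[OF inj sub] continuous_on_subset[OF cU sub] S(4-18) line])
  qed
qed

lemma cramer_c:
  fixes a b w :: complex
  assumes d: "Im (cnj a * b) \<noteq> 0"
  shows "(Im (cnj w * b) / Im (cnj a * b)) *\<^sub>R a + (Im (cnj a * w) / Im (cnj a * b)) *\<^sub>R b = w"
proof -
  have key: "Im (cnj w * b) *\<^sub>R a + Im (cnj a * w) *\<^sub>R b = Im (cnj a * b) *\<^sub>R w"
    by (simp add: complex_eq_iff algebra_simps)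
  have "(Im (cnj w * b) / Im (cnj a * b)) *\<^sub>R a + (Im (cnj a * w) / Im (cnj a * b)) *\<^sub>R b
      = (1 / Im (cnj a * b)) *\<^sub>R (Im (cnj w * b) *\<^sub>R a + Im (cnj a * w) *\<^sub>R b)"
    by (simp add: scaleR_add_right)
  also have "\<dots> = (1 / Im (cnj a * b)) *\<^sub>R (Im (cnj a * b) *\<^sub>R w)" by (simp only: key)
  also have "\<dots> = w" using d by simp
  finally show ?thesis .
qed

lemma inj_annulus:
  fixes \<Phi> U :: "complex \<Rightarrow> complex"
  assumes hom: "\<exists>\<Psi>. homeomorphism (sphere 0 1) \<gamma> \<Phi> \<Psi>"
    and cont: "continuous_on (cball 0 1) U"
    and bd: "\<forall>z\<in>sphere 0 1. U z = \<Phi> z"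
    and lh: "\<forall>P\<in>sphere 0 1. local_homeo_at U P"
  shows "\<exists>\<rho>. 0 < \<rho> \<and> \<rho> < 1 \<and> inj_on U (ball 0 1 - cball 0 \<rho>)"
proof (rule ccontr)
  assume H: "\<not> ?thesis"
  define \<rho> where "\<rho> n = 1 - inverse (real (Suc n)) / 2" for n
  have \<rho>01: "0 < \<rho> n" "\<rho> n < 1" for n
  proof -
    have "inverse (real (Suc n)) \<le> 1" by (simp add: inverse_le_1_iff)
    moreover have "inverse (real (Suc n)) > 0" by simp
    ultimately show "0 < \<rho> n" "\<rho> n < 1" unfolding \<rho>_def by linarith+
  qed
  have ninj: "\<not> inj_on U (ball 0 1 - cball 0 (\<rho> n))" for n using H \<rho>01[of n] by blast
  have "\<forall>n. \<exists>p. fst p \<in> ball 0 1 - cball 0 (\<rho> n) \<and> snd p \<in> ball 0 1 - cball 0 (\<rho> n)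
      \<and> U (fst p) = U (snd p) \<and> fst p \<noteq> snd p"
  proof
    fix n
    obtain a b where "a \<in> ball 0 1 - cball 0 (\<rho> n)" "b \<in> ball 0 1 - cball 0 (\<rho> n)" "U a = U b" "a \<noteq> b"
      using ninj[of n] unfolding inj_on_def by blast
    then show "\<exists>p. fst p \<in> ball 0 1 - cball 0 (\<rho> n) \<and> snd p \<in> ball 0 1 - cball 0 (\<rho> n)
      \<and> U (fst p) = U (snd p) \<and> fst p \<noteq> snd p" by (intro exI[of _ "(a, b)"]) simp
  qed
  then obtain f where f: "\<And>n. fst (f n) \<in> ball 0 1 - cball 0 (\<rho> n)" "\<And>n. snd (f n) \<in> ball 0 1 - cball 0 (\<rho> n)"
    "\<And>n. U (fst (f n)) = U (snd (f n))" "\<And>n. fst (f n) \<noteq> snd (f n)"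
    by metis
  have fin: "f n \<in> cball (0::complex) 1 \<times> cball (0::complex) 1" for n
    using f(1)[of n] f(2)[of n] by (cases "f n") auto
  have sc: "seq_compact (cball (0::complex) 1 \<times> cball (0::complex) 1)"
    by (intro compact_imp_seq_compact compact_Times) simp_all
  obtain l r where l: "l \<in> cball (0::complex) 1 \<times> cball (0::complex) 1" and r: "strict_mono r" and lim: "(f \<circ> r) \<longlonglongrightarrow> l"
    using seq_compactE[OF sc] fin by blast
  obtain z w where zw: "l = (z, w)" by (cases l)
  have zl: "(\<lambda>n. fst (f (r n))) \<longlonglongrightarrow> z" using tendsto_fst[OF lim] zw by (simp add: o_def)
  have wl: "(\<lambda>n. snd (f (r n))) \<longlonglongrightarrow> w" using tendsto_snd[OF lim] zw by (simp add: o_def)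
  have \<rho>lim: "\<rho> \<longlonglongrightarrow> 1"
  proof -
    have "(\<lambda>n. 1 - inverse (real (Suc n)) / 2) \<longlonglongrightarrow> 1 - 0 / 2"
      by (intro tendsto_intros LIMSEQ_inverse_real_of_nat) simp
    then show ?thesis unfolding \<rho>_def by simp
  qed
  have \<rho>mono: "\<rho> n \<le> \<rho> (r n)" for n
  proof -
    have "n \<le> r n" using seq_suble[OF r] .
    then have "inverse (real (Suc (r n))) \<le> inverse (real (Suc n))"
      by (intro le_imp_inverse_le) auto
    then show ?thesis unfolding \<rho>_def by simp
  qed
  have norm1: "1 \<le> norm a" if al: "(\<lambda>n. X n) \<longlonglongrightarrow> a" and Xn: "\<And>n. X n \<in> ball 0 1 - cball 0 (\<rho> (r n))" for X a
  proof (rule LIMSEQ_le[OF \<rho>lim tendsto_norm[OF al]])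
    show "\<exists>N. \<forall>n\<ge>N. \<rho> n \<le> norm (X n)"
    proof (intro exI allI impI)
      fix n :: nat
      have "\<rho> (r n) < norm (X n)" using Xn[of n] by simp
      then show "\<rho> n \<le> norm (X n)" using \<rho>mono[of n] by simp
    qed
  qed
  have zs: "z \<in> sphere 0 1"
  proof -
    have "1 \<le> norm z" by (rule norm1[OF zl]) (use f(1) in blast)
    moreover have "norm z \<le> 1" using l zw by simp
    ultimately show ?thesis by simp
  qed
  have ws: "w \<in> sphere 0 1"
  proof -
    have "1 \<le> norm w" by (rule norm1[OF wl]) (use f(2) in blast)
    moreover have "norm w \<le> 1" using l zw by simp
    ultimately show ?thesis by simp
  qed
  have inc: "fst (f (r n)) \<in> cball 0 1" "snd (f (r n)) \<in> cball 0 1" for n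
    using fin[of "r n"] by (auto simp: mem_Times_iff)
  have Uz: "(\<lambda>n. U (fst (f (r n)))) \<longlonglongrightarrow> U z"
    by (rule continuous_on_tendsto_compose[OF cont zl]) (use zs inc in auto)
  have Uw: "(\<lambda>n. U (snd (f (r n)))) \<longlonglongrightarrow> U w"
    by (rule continuous_on_tendsto_compose[OF cont wl]) (use ws inc in auto)
  have "U z = U w" using LIMSEQ_unique[OF Uz] Uw f(3) by simp
  then have "\<Phi> z = \<Phi> w" using bd zs ws by simp
  moreover obtain \<Psi> where "homeomorphism (sphere 0 1) \<gamma> \<Phi> \<Psi>" using hom by blast
  ultimately have zweq: "z = w" using zs ws by (metis homeomorphism_apply1)
  obtain G where G: "open G" "z \<in> G" "inj_on U (G \<inter> cball 0 1)"
    using lh zs unfolding local_homeo_at_def by blast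
  have ev: "eventually (\<lambda>n. fst (f (r n)) \<in> G) sequentially" "eventually (\<lambda>n. snd (f (r n)) \<in> G) sequentially"
    using topological_tendstoD[OF zl G(1,2)] topological_tendstoD[OF wl G(1)] G(2) zweq by auto
  then obtain n where "fst (f (r n)) \<in> G" "snd (f (r n)) \<in> G"
    using eventually_conj eventually_sequentially by (metis (no_types, lifting) order_refl)
  then have "fst (f (r n)) = snd (f (r n))"
    using G(3) inc f(3) unfolding inj_on_def by blast
  then show False using f(4) by blast
qed

theorem lemma4p1:
  fixes \<Phi> U :: "complex \<Rightarrow> complex" and \<gamma> :: "complex set"
  assumes "\<exists>\<Psi>. homeomorphism (sphere 0 1) \<gamma> \<Phi> \<Psi>"
    and "\<exists>c. simple_path c \<and> pathfinish c = pathstart c \<and> path_image c = \<gamma>"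
    and "C2_on (ball 0 1) U"
    and "continuous_on (cball 0 1) U"
    and "\<forall>x\<in>ball 0 1. laplacian U x = 0"
    and "\<forall>z\<in>sphere 0 1. U z = \<Phi> z"
    and "\<forall>P\<in>sphere 0 1. local_homeo_at U P"
  shows "\<exists>\<rho>. 0 < \<rho> \<and> \<rho> < 1 \<and> diffeo_onto_image U (ball 0 1 - cball 0 \<rho>)"
proof -
  obtain \<rho> where \<rho>: "0 < \<rho>" "\<rho> < 1" and inj: "inj_on U (ball 0 1 - cball 0 \<rho>)"
    using inj_annulus[OF assms(1,4,6,7)] by blast
  define A where "A = ball (0::complex) 1 - cball 0 \<rho>"
  have oA: "open A" unfolding A_def by (simp add: open_Diff)
  have AB: "A \<subseteq> ball 0 1" unfolding A_def by blast
  have injA: "inj_on U A" using inj unfolding A_def .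
  have cUA: "continuous_on A U" using continuous_on_subset[OF assms(4)] AB ball_subset_cball by blast
  have b1: "(1::complex) \<in> Basis" and bi: "\<i> \<in> Basis" by (simp_all add: Basis_complex_def)
  have C2: "\<forall>x\<in>ball 0 1. U differentiable at x" "\<forall>v\<in>Basis. \<forall>x\<in>ball 0 1. pderiv_dir U v differentiable at x"
    "\<forall>v\<in>Basis. \<forall>w\<in>Basis. continuous_on (ball 0 1) (pderiv_dir (pderiv_dir U v) w)"
    using assms(3) unfolding C2_on_def by auto
  define Ux where "Ux = pderiv_dir U 1"
  define Uy where "Uy = pderiv_dir U \<i>"
  define DX where "DX w = frechet_derivative Ux (at w)" for w
  define DY where "DY w = frechet_derivative Uy (at w)" for w
  have dU: "(U has_derivative (\<lambda>h. Re h *\<^sub>R Ux w + Im h *\<^sub>R Uy w)) (at w)" if "w \<in> ball 0 1" for w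
  proof -
    have d: "(U has_derivative frechet_derivative U (at w)) (at w)"
      using C2(1) that frechet_derivative_works by blast
    have "frechet_derivative U (at w) h = Re h *\<^sub>R Ux w + Im h *\<^sub>R Uy w" for h
      using lin_expand[OF has_derivative_linear[OF d], of h] unfolding Ux_def Uy_def pderiv_dir_def .
    then have "frechet_derivative U (at w) = (\<lambda>h. Re h *\<^sub>R Ux w + Im h *\<^sub>R Uy w)" by (rule ext)
    with d show ?thesis by simp
  qed
  have dX: "(Ux has_derivative DX w) (at w)" if "w \<in> ball 0 1" for w
    using C2(2) b1 that frechet_derivative_works unfolding DX_def Ux_def by blast
  have dY: "(Uy has_derivative DY w) (at w)" if "w \<in> ball 0 1" for w
    using C2(2) bi that frechet_derivative_works unfolding DY_def Uy_def by blast
  have cX: "continuous_on (ball 0 1) (\<lambda>w. DX w \<i>)"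
  proof -
    have "continuous_on (ball 0 1) (pderiv_dir (pderiv_dir U 1) \<i>)" using C2(3) b1 bi by blast
    moreover have "pderiv_dir (pderiv_dir U 1) \<i> = (\<lambda>w. DX w \<i>)"
      unfolding DX_def Ux_def by (rule ext) (unfold pderiv_dir_def, rule refl)
    ultimately show ?thesis by simp
  qed
  have cY: "continuous_on (ball 0 1) (\<lambda>w. DY w 1)"
  proof -
    have "continuous_on (ball 0 1) (pderiv_dir (pderiv_dir U \<i>) 1)" using C2(3) b1 bi by blast
    moreover have "pderiv_dir (pderiv_dir U \<i>) 1 = (\<lambda>w. DY w 1)"
      unfolding DY_def Uy_def by (rule ext) (unfold pderiv_dir_def, rule refl)
    ultimately show ?thesis by simp
  qed
  have lap: "DX w 1 + DY w \<i> = 0" if "w \<in> ball 0 1" for w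
  proof -
    have ne: "(1::complex) \<noteq> \<i>" by (simp add: complex_eq_iff)
    have "laplacian U w = pderiv_dir (pderiv_dir U 1) 1 w + pderiv_dir (pderiv_dir U \<i>) \<i> w"
      unfolding laplacian_def Basis_complex_def using ne by simp
    also have "\<dots> = DX w 1 + DY w \<i>"
      unfolding DX_def DY_def Ux_def Uy_def by (unfold pderiv_dir_def, rule refl)
    finally have "laplacian U w = DX w 1 + DY w \<i>" .
    then show ?thesis using assms(5) that by simp
  qed
  have det: "Im (cnj (Ux x) * Uy x) \<noteq> 0" if "x \<in> A" for x
  proof (rule lewy[OF oA that injA cUA])
    show "\<And>w. w \<in> A \<Longrightarrow> (U has_derivative (\<lambda>h. Re h *\<^sub>R Ux w + Im h *\<^sub>R Uy w)) (at w)"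
      using dU AB by blast
    show "\<And>w. w \<in> A \<Longrightarrow> (Ux has_derivative DX w) (at w)" using dX AB by blast
    show "\<And>w. w \<in> A \<Longrightarrow> (Uy has_derivative DY w) (at w)" using dY AB by blast
    show "continuous_on A (\<lambda>w. DX w \<i>)" using continuous_on_subset[OF cX AB] .
    show "continuous_on A (\<lambda>w. DY w 1)" using continuous_on_subset[OF cY AB] .
    show "\<And>w. w \<in> A \<Longrightarrow> DX w 1 + DY w \<i> = 0" using lap AB by blast
  qed
  define g where "g = inv_into A U"
  have gU: "g (U x) = x" if "x \<in> A" for x using injA that by (simp add: g_def)
  define Gi where "Gi x w = complex_of_real (Im (cnj w * Uy x) / Im (cnj (Ux x) * Uy x))
      + \<i> * complex_of_real (Im (cnj (Ux x) * w) / Im (cnj (Ux x) * Uy x))" for x w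
  have inv: "Re (Gi x w) *\<^sub>R Ux x + Im (Gi x w) *\<^sub>R Uy x = w" if "x \<in> A" for x w
  proof -
    have d: "Im (cnj (Ux x) * Uy x) \<noteq> 0" using det[OF that] .
    have e1: "Re (Gi x w) = Im (cnj w * Uy x) / Im (cnj (Ux x) * Uy x)"
      unfolding Gi_def by simp
    have e2: "Im (Gi x w) = Im (cnj (Ux x) * w) / Im (cnj (Ux x) * Uy x)"
      unfolding Gi_def by simp
    show ?thesis unfolding e1 e2 by (rule cramer_c[OF d])
  qed
  have dg: "(g has_derivative Gi x) (at (U x))" if x: "x \<in> A" for x
  proof (rule has_derivative_inverse_strong[OF oA x cUA gU])
    show "(U has_derivative (\<lambda>h. Re h *\<^sub>R Ux x + Im h *\<^sub>R Uy x)) (at x)" using dU x AB by blast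
    show "(\<lambda>h. Re h *\<^sub>R Ux x + Im h *\<^sub>R Uy x) \<circ> Gi x = id" using inv[OF x] by (simp add: fun_eq_iff)
  qed
  have cg: "continuous_on (U ` A) g"
  proof (rule continuous_at_imp_continuous_on, rule ballI)
    fix y assume "y \<in> U ` A"
    then obtain x where x: "x \<in> A" "y = U x" by blast
    show "isCont g y" using has_derivative_continuous[OF dg[OF x(1)]] x by simp
  qed
  have cbasic: "continuous_on (ball 0 1) (pderiv_dir U v)" if "v \<in> Basis" for v
  proof (rule continuous_at_imp_continuous_on, rule ballI)
    fix x assume "x \<in> ball (0::complex) 1"
    then have "pderiv_dir U v differentiable at x" using C2(2) that by blast
    then show "isCont (pderiv_dir U v) x" by (rule differentiable_imp_continuous_within)
  qed
  have cUx: "continuous_on A Ux" unfolding Ux_def using continuous_on_subset[OF cbasic[OF b1] AB] .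
  have cUy: "continuous_on A Uy" unfolding Uy_def using continuous_on_subset[OF cbasic[OF bi] AB] .
  have cGi: "continuous_on A (\<lambda>x. Gi x v)" for v
    unfolding Gi_def by (intro continuous_intros cUx cUy ballI det)
  have C1U: "C1_on A U"
    unfolding C1_on_def
  proof (intro conjI ballI)
    show "U differentiable at x" if "x \<in> A" for x using C2(1) that AB by blast
    show "continuous_on A (pderiv_dir U v)" if "v \<in> Basis" for v
      using continuous_on_subset[OF cbasic[OF that] AB] .
  qed
  have C1g: "C1_on (U ` A) (inv_into A U)"
    unfolding C1_on_def g_def[symmetric]
  proof (intro conjI ballI)
    show "g differentiable at y" if yA: "y \<in> U ` A" for y
    proof -
      obtain x where x: "x \<in> A" "y = U x" using yA by blast
      have "(g has_derivative Gi x) (at y)" using dg[OF x(1)] unfolding x(2) .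
      then show ?thesis unfolding differentiable_def by blast
    qed
    show "continuous_on (U ` A) (pderiv_dir g v)" for v
    proof -
      have eq: "pderiv_dir g v y = Gi (g y) v" if yA: "y \<in> U ` A" for y
      proof -
        obtain x where x: "x \<in> A" "y = U x" using yA by blast
        have fd: "frechet_derivative g (at (U x)) = Gi x" using frechet_derivative_at[OF dg[OF x(1)]] by (rule sym)
        have "pderiv_dir g v y = frechet_derivative g (at (U x)) v" unfolding pderiv_dir_def x(2) by (rule refl)
        also have "\<dots> = Gi (g y) v" unfolding fd x(2) gU[OF x(1)] by (rule refl)
        finally show ?thesis .
      qed
      have "continuous_on (U ` A) (\<lambda>y. Gi (g y) v)"
      proof (rule continuous_on_compose2[OF cGi[of v] cg])
        show "g ` U ` A \<subseteq> A"
        proof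
          fix z assume "z \<in> g ` U ` A"
          then obtain x where "x \<in> A" "z = g (U x)" by blast
          then show "z \<in> A" using gU by simp
        qed
      qed
      then show ?thesis by (rule continuous_on_eq) (simp add: eq)
    qed
  qed
  have "diffeo_onto_image U A"
    unfolding diffeo_onto_image_def using injA invariance_of_domain[OF cUA oA injA] C1U C1g by (intro conjI)
  then show ?thesis using \<rho> unfolding A_def by (intro exI[of _ \<rho>] conjI)
qed

end
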